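(* Let $\sigma$ be a signature. For any set $\Delta\cup\{\alpha\}$ of $\mathcal{CO}[\sigma]$-formulas, $\Delta\models^g\alpha$ if and only if $\Delta\models^c\alpha$.
   Context: A signature $\sigma=(\mathrm{Dom},\mathrm{Ran})$: $\mathrm{Dom}$ nonempty finite set of variables, each with nonempty finite range $\mathrm{Ran}(X)$; $\mathbf X=\mathbf x$ abbreviates $X_1=x_1\wedge\dots\wedge X_n=x_n$ ($\mathbf x\in\prod\mathrm{Ran}(X_i)$), inconsistent if it contains $X=x,X=x'$ with $x\ne x'$. $\mathcal{CO}[\sigma]$: $\alpha::=X=x\mid\neg\alpha\mid\alpha\wedge\alpha\mid\alpha\vee\alpha\mid\mathbf X=\mathbf x\;\Box\!\!\rightarrow\alpha$. Systems of functions $\mathcal F$: for each $V\in\mathrm{En}(\mathcal F)\subseteq\mathrm{Dom}$ parents $PA^{\mathcal F}_V\subseteq\mathrm{Dom}\setminus\{V\}$ and $\mathcal F_V:\mathrm{Ran}(PA^{\mathcal F}_V)\to\mathrm{Ran}(V)$; $\mathrm{Ex}(\mathcal F)=\mathrm{Dom}\setminus\mathrm{En}(\mathcal F)$; only recursive (acyclic parent graph). An assignment $s$ is compatible with $\mathcal F$ if $s(V)=\mathcal F_V(s(PA^{\mathcal F}_V))$ for $V\in\mathrm{En}(\mathcal F)$. For consistent $\mathbf X=\mathbf x$: $\mathcal F_{\mathbf X=\mathbf x}$ restricts $\mathcal F$ to $\mathrm{En}(\mathcal F)\setminus\mathbf X$; $s^{\mathcal F}_{\mathbf X=\mathbf x}$: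 $X_i\mapsto x_i$, $V\mapsto s(V)$ on $\mathrm{Ex}(\mathcal F)\setminus\mathbf X$, $V\mapsto\mathcal F_V(s^{\mathcal F}_{\mathbf X=\mathbf x}(PA^{\mathcal F}_V))$ on $\mathrm{En}(\mathcal F)\setminus\mathbf X$. Causal team $T=(T^-,\mathcal F)$ ($T^-$ a set of compatible assignments; empty team components identified as $\emptyset$); causal subteams $(S^-,\mathcal F)$, $S^-\subseteq T^-$; $T_{\mathbf X=\mathbf x}=(\{s^{\mathcal F}_{\mathbf X=\mathbf x}:s\in T^-\},\mathcal F_{\mathbf X=\mathbf x})$. $\models^c$: $T\models X=x$ iff $s(X)=x$ for all $s\in T^-$; $T\models\neg\alpha$ iff $(\{s\},\mathcal F)\not\models\alpha$ for all $s\in T^-$; $\wedge$ classical; $T\models\alpha\vee\beta$ iff causal subteams $T_1,T_2$ exist with $T_1^-\cup T_2^-=T^-$, $T_1\models\alpha$, $T_2\models\beta$; $T\models\mathbf X=\mathbf x\;\Box\!\!\rightarrow\alpha$ iff $\mathbf X=\mathbf x$ inconsistent or $T_{\mathbf X=\mathbf x}\models\alpha$. Generalized causal team: a set $T$ of compatible pairs $(s,\mathcal F)$ with $\mathcal F$ recursive; $T^-=\{s:(s,\mathcal F)\in T\}$; $T_{\mathbf X=\mathbf x}=\{(s^{\mathcal F}_{\mathbf X=\mathbf x},\mathcal F_{\mathbf X=\mathbf x}):(s,\mathcal F)\in T\}$; $\models^g$: same clauses except $T\models\neg\alpha$ iff $\{(s,\mathcal F)\}\not\models\alpha$ for all $(s,\mathcal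 F)\in T$, and $T\models\alpha\vee\beta$ iff $T=T_1\cup T_2$ with $T_1\models\alpha$, $T_2\models\beta$. $\Delta\models^c\alpha$: every causal team over $\sigma$ satisfying all of $\Delta$ satisfies $\alpha$; $\Delta\models^g\alpha$ likewise for generalized causal teams over $\sigma$. *)

theory Defs
  imports Main
begin

text \<open>Signature: the set of variables Dom is the (finite, nonempty) type 'v;
  R :: 'v \<Rightarrow> 'a set gives the range of each variable.\<close>

definition signature :: "('v::finite \<Rightarrow> 'a set) \<Rightarrow> bool" where
  "signature R \<longleftrightarrow> (\<forall>X. finite (R X) \<and> R X \<noteq> {})"

definition assignment :: "('v \<Rightarrow> 'a set) \<Rightarrow> ('v \<Rightarrow> 'a) \<Rightarrow> bool" where
  "assignment R s \<longleftrightarrow> (\<forall>V. s V \<in> R V)"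

text \<open>Systems of functions: F V = None iff V is exogenous; otherwise
  F V = Some (PA_V, F_V), where F_V takes an assignment and depends only on PA_V
  (canonically: it only looks at PA_V, and is undefined outside Ran(PA_V)).\<close>
type_synonym ('v,'a) system = "'v \<Rightarrow> ('v set \<times> (('v \<Rightarrow> 'a) \<Rightarrow> 'a)) option"

definition En :: "('v,'a) system \<Rightarrow> 'v set" where
  "En F = dom F"

definition parent_rel :: "('v,'a) system \<Rightarrow> ('v \<times> 'v) set" where
  "parent_rel F = {(Y, V). \<exists>P f. F V = Some (P, f) \<and> Y \<in> P}"

definition recursive_sys :: "('v,'a) system \<Rightarrow> bool" where
  "recursive_sys F \<longleftrightarrow> acyclic (parent_rel F)"

definition valid_system :: "('v \<Rightarrow> 'a set) \<Rightarrow> ('v,'a) system \<Rightarrow> bool" where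
  "valid_system R F \<longleftrightarrow>
     (\<forall>V P f. F V = Some (P, f) \<longrightarrow>
        V \<notin> P
      \<and> (\<forall>g. (\<forall>Y\<in>P. g Y \<in> R Y) \<longrightarrow> f g \<in> R V)
      \<and> (\<forall>g. f g = f (\<lambda>Y. if Y \<in> P then g Y else undefined))
      \<and> (\<forall>g. (\<exists>Y\<in>P. g Y \<notin> R Y) \<longrightarrow> f g = undefined))
     \<and> recursive_sys F"

definition compatible :: "('v,'a) system \<Rightarrow> ('v \<Rightarrow> 'a) \<Rightarrow> bool" where
  "compatible F s \<longleftrightarrow> (\<forall>V P f. F V = Some (P, f) \<longrightarrow> s V = f s)"

text \<open>Interventions X = x are lists of (variable, value) pairs.\<close>
definition consistent :: "('v \<times> 'a) list \<Rightarrow> bool" where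
  "consistent xs \<longleftrightarrow> (\<forall>X x x'. (X, x) \<in> set xs \<and> (X, x') \<in> set xs \<longrightarrow> x = x')"

definition restrict_sys :: "('v,'a) system \<Rightarrow> ('v \<times> 'a) list \<Rightarrow> ('v,'a) system" where
  "restrict_sys F xs = (\<lambda>V. case map_of xs V of Some _ \<Rightarrow> None | None \<Rightarrow> F V)"

text \<open>The intervened assignment s^F_{X=x}: the unique assignment satisfying
  the recursive defining equations (unique by recursiveness of F).\<close>
definition interv :: "('v,'a) system \<Rightarrow> ('v \<times> 'a) list \<Rightarrow> ('v \<Rightarrow> 'a) \<Rightarrow> ('v \<Rightarrow> 'a)" where
  "interv F xs s = (THE t. \<forall>V. t V =
      (case map_of xs V of Some x \<Rightarrow> x
       | None \<Rightarrow> (case F V of None \<Rightarrow> s V | Some (P, f) \<Rightarrow> f t)))"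

datatype ('v,'a) co =
    Eq 'v 'a
  | Neg "('v,'a) co"
  | Conj "('v,'a) co" "('v,'a) co"
  | Disj "('v,'a) co" "('v,'a) co"
  | Cf "('v \<times> 'a) list" "('v,'a) co"

fun wf_co :: "('v \<Rightarrow> 'a set) \<Rightarrow> ('v,'a) co \<Rightarrow> bool" where
  "wf_co R (Eq X x) = (x \<in> R X)"
| "wf_co R (Neg a) = wf_co R a"
| "wf_co R (Conj a b) = (wf_co R a \<and> wf_co R b)"
| "wf_co R (Disj a b) = (wf_co R a \<and> wf_co R b)"
| "wf_co R (Cf xs a) = ((\<forall>(X, x) \<in> set xs. x \<in> R X) \<and> wf_co R a)"

fun sat_c :: "('v,'a) system \<Rightarrow> ('v \<Rightarrow> 'a) set \<Rightarrow> ('v,'a) co \<Rightarrow> bool" where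
  "sat_c F T (Eq X x) = (\<forall>s\<in>T. s X = x)"
| "sat_c F T (Neg a) = (\<forall>s\<in>T. \<not> sat_c F {s} a)"
| "sat_c F T (Conj a b) = (sat_c F T a \<and> sat_c F T b)"
| "sat_c F T (Disj a b) = (\<exists>T1 T2. T1 \<subseteq> T \<and> T2 \<subseteq> T \<and> T1 \<union> T2 = T \<and> sat_c F T1 a \<and> sat_c F T2 b)"
| "sat_c F T (Cf xs a) = (\<not> consistent xs \<or> sat_c (restrict_sys F xs) (interv F xs ` T) a)"

fun sat_g :: "(('v \<Rightarrow> 'a) \<times> ('v,'a) system) set \<Rightarrow> ('v,'a) co \<Rightarrow> bool" where
  "sat_g T (Eq X x) = (\<forall>(s, F)\<in>T. s X = x)"
| "sat_g T (Neg a) = (\<forall>p\<in>T. \<not> sat_g {p} a)"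
| "sat_g T (Conj a b) = (sat_g T a \<and> sat_g T b)"
| "sat_g T (Disj a b) = (\<exists>T1 T2. T = T1 \<union> T2 \<and> sat_g T1 a \<and> sat_g T2 b)"
| "sat_g T (Cf xs a) = (\<not> consistent xs \<or>
      sat_g ((\<lambda>(s, F). (interv F xs s, restrict_sys F xs)) ` T) a)"

definition causal_team :: "('v \<Rightarrow> 'a set) \<Rightarrow> ('v,'a) system \<Rightarrow> ('v \<Rightarrow> 'a) set \<Rightarrow> bool" where
  "causal_team R F T \<longleftrightarrow> valid_system R F \<and> (\<forall>s\<in>T. assignment R s \<and> compatible F s)"

definition gen_causal_team :: "('v \<Rightarrow> 'a set) \<Rightarrow> (('v \<Rightarrow> 'a) \<times> ('v,'a) system) set \<Rightarrow> bool" where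
  "gen_causal_team R T \<longleftrightarrow>
     (\<forall>(s, F)\<in>T. valid_system R F \<and> assignment R s \<and> compatible F s)"

definition ent_c :: "('v \<Rightarrow> 'a set) \<Rightarrow> ('v,'a) co set \<Rightarrow> ('v,'a) co \<Rightarrow> bool" where
  "ent_c R \<Delta> \<alpha> \<longleftrightarrow> (\<forall>F T. causal_team R F T \<and> (\<forall>\<delta>\<in>\<Delta>. sat_c F T \<delta>) \<longrightarrow> sat_c F T \<alpha>)"

definition ent_g :: "('v \<Rightarrow> 'a set) \<Rightarrow> ('v,'a) co set \<Rightarrow> ('v,'a) co \<Rightarrow> bool" where
  "ent_g R \<Delta> \<alpha> \<longleftrightarrow> (\<forall>T. gen_causal_team R T \<and> (\<forall>\<delta>\<in>\<Delta>. sat_g T \<delta>) \<longrightarrow> sat_g T \<alpha>)"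

end

theory Submission
  imports Defs
begin

lemma sat_g_empty: "sat_g {} a"
  by (induction a) auto

lemma flat_g: "sat_g T a \<longleftrightarrow> (\<forall>p\<in>T. sat_g {p} a)"
proof (induction a arbitrary: T)
  case (Eq X x)
  show ?case by auto
next
  case (Neg a)
  show ?case by simp
next
  case (Conj a b)
  have "sat_g T a \<longleftrightarrow> (\<forall>p\<in>T. sat_g {p} a)" "sat_g T b \<longleftrightarrow> (\<forall>p\<in>T. sat_g {p} b)"
    by (rule Conj.IH(1), rule Conj.IH(2))
  then show ?case by (simp only: sat_g.simps) blast
next
  case (Disj a b)
  show ?case
  proof
    assume "sat_g T (Disj a b)"
    then obtain T1 T2 where T: "T = T1 \<union> T2" "sat_g T1 a" "sat_g T2 b" by auto
    show "\<forall>p\<in>T. sat_g {p} (Disj a b)"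
    proof
      fix p assume "p \<in> T"
      then have "p \<in> T1 \<or> p \<in> T2" using T by auto
      then show "sat_g {p} (Disj a b)"
      proof
        assume "p \<in> T1"
        then have "sat_g {p} a" using T Disj.IH(1)[of T1] by auto
        moreover have "{p} = {p} \<union> {}" by simp
        ultimately show ?thesis using sat_g_empty[of b] by (simp only: sat_g.simps) blast
      next
        assume "p \<in> T2"
        then have "sat_g {p} b" using T Disj.IH(2)[of T2] by auto
        moreover have "{p} = {} \<union> {p}" by simp
        ultimately show ?thesis using sat_g_empty[of a] by (simp only: sat_g.simps) blast
      qed
    qed
  next
    assume H: "\<forall>p\<in>T. sat_g {p} (Disj a b)"
    define T1 where "T1 = {p\<in>T. sat_g {p} a}"
    define T2 where "T2 = {p\<in>T. sat_g {p} b}"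
    have "T = T1 \<union> T2"
    proof
      show "T \<subseteq> T1 \<union> T2"
      proof
        fix p assume p: "p \<in> T"
        then obtain A B where AB: "{p} = A \<union> B" "sat_g A a" "sat_g B b" using H by auto
        have "p \<in> A \<or> p \<in> B" using AB by blast
        moreover have "A \<subseteq> {p}" "B \<subseteq> {p}" using AB by auto
        ultimately have "A = {p} \<or> B = {p}" by blast
        then show "p \<in> T1 \<union> T2" using AB p T1_def T2_def by auto
      qed
    qed (auto simp: T1_def T2_def)
    moreover have "sat_g T1 a" using Disj.IH(1)[of T1] by (auto simp: T1_def)
    moreover have "sat_g T2 b" using Disj.IH(2)[of T2] by (auto simp: T2_def)
    ultimately show "sat_g T (Disj a b)" by auto
  qed
next
  case (Cf xs a)
  let ?f = "\<lambda>(s, F). (interv F xs s, restrict_sys F xs)"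
  have "sat_g (?f ` T) a \<longleftrightarrow> (\<forall>q\<in>?f ` T. sat_g {q} a)" by (rule Cf.IH)
  moreover have "\<And>p. ?f ` {p} = {?f p}" by simp
  ultimately show ?case by (simp only: sat_g.simps) blast
qed

lemma emb: "sat_c F T a = sat_g ((\<lambda>s. (s,F)) ` T) a"
proof (induction a arbitrary: F T)
  case (Eq X x)
  then show ?case by auto
next
  case (Neg a)
  then show ?case by auto
next
  case (Conj a b)
  then show ?case by auto
next
  case (Disj a b)
  show ?case
  proof
    assume "sat_c F T (Disj a b)"
    then obtain T1 T2 where "T1 \<subseteq> T" "T2 \<subseteq> T" "T1 \<union> T2 = T" "sat_c F T1 a" "sat_c F T2 b" by auto
    then have "(\<lambda>s. (s,F)) ` T = (\<lambda>s. (s,F)) ` T1 \<union> (\<lambda>s. (s,F)) ` T2"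
      "sat_g ((\<lambda>s. (s,F)) ` T1) a" "sat_g ((\<lambda>s. (s,F)) ` T2) b" using Disj.IH by auto
    then show "sat_g ((\<lambda>s. (s,F)) ` T) (Disj a b)" by (simp only: sat_g.simps) blast
  next
    assume "sat_g ((\<lambda>s. (s,F)) ` T) (Disj a b)"
    then obtain U1 U2 where U: "(\<lambda>s. (s,F)) ` T = U1 \<union> U2" "sat_g U1 a" "sat_g U2 b" by auto
    define T1 where "T1 = fst ` U1"
    define T2 where "T2 = fst ` U2"
    have U1: "U1 = (\<lambda>s. (s,F)) ` T1" unfolding T1_def using U(1)
      by (force simp: image_iff)
    have U2: "U2 = (\<lambda>s. (s,F)) ` T2" unfolding T2_def using U(1)
      by (force simp: image_iff)
    have "T1 \<union> T2 = T"
    proof -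
      have "fst ` ((\<lambda>s. (s,F)) ` T) = T" by (simp add: image_image)
      then show ?thesis using U(1) by (simp add: image_Un T1_def T2_def)
    qed
    moreover have "sat_c F T1 a" using U(2) Disj.IH(1)[of F T1] unfolding U1[symmetric] by blast
    moreover have "sat_c F T2 b" using U(3) Disj.IH(2)[of F T2] unfolding U2[symmetric] by blast
    ultimately show "sat_c F T (Disj a b)" by (simp only: sat_c.simps) blast
  qed
next
  case (Cf xs a)
  have e: "(\<lambda>(s, F). (interv F xs s, restrict_sys F xs)) ` (\<lambda>s. (s,F)) ` T
      = (\<lambda>s. (s, restrict_sys F xs)) ` (interv F xs ` T)" unfolding image_image by simp
  have "sat_c F T (Cf xs a) = (\<not> consistent xs \<or> sat_c (restrict_sys F xs) (interv F xs ` T) a)"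
    by (simp only: sat_c.simps)
  also have "\<dots> = (\<not> consistent xs \<or> sat_g ((\<lambda>s. (s, restrict_sys F xs)) ` (interv F xs ` T)) a)"
    using Cf.IH[of "restrict_sys F xs" "interv F xs ` T"] by (simp only:)
  also have "\<dots> = sat_g ((\<lambda>s. (s,F)) ` T) (Cf xs a)"
    unfolding sat_g.simps e by (rule refl)
  finally show ?case .
qed

theorem corollary2p17:
  fixes R :: "'v::finite \<Rightarrow> 'a set"
    and \<Delta> :: "('v,'a) co set" and \<alpha> :: "('v,'a) co"
  assumes "signature R"
    and "\<forall>\<delta>\<in>\<Delta>. wf_co R \<delta>"
    and "wf_co R \<alpha>"
  shows "ent_g R \<Delta> \<alpha> \<longleftrightarrow> ent_c R \<Delta> \<alpha>"
proof
  assume G: "ent_g R \<Delta> \<alpha>"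
  show "ent_c R \<Delta> \<alpha>" unfolding ent_c_def
  proof (intro allI impI)
    fix F T assume H: "causal_team R F T \<and> (\<forall>\<delta>\<in>\<Delta>. sat_c F T \<delta>)"
    have "gen_causal_team R ((\<lambda>s. (s,F)) ` T)" using H
      by (auto simp: gen_causal_team_def causal_team_def)
    moreover have "\<forall>\<delta>\<in>\<Delta>. sat_g ((\<lambda>s. (s,F)) ` T) \<delta>" using H emb by blast
    ultimately have "sat_g ((\<lambda>s. (s,F)) ` T) \<alpha>" using G unfolding ent_g_def by blast
    then show "sat_c F T \<alpha>" using emb by blast
  qed
next
  assume C: "ent_c R \<Delta> \<alpha>"
  show "ent_g R \<Delta> \<alpha>" unfolding ent_g_def
  proof (intro allI impI)
    fix T assume H: "gen_causal_team R T \<and> (\<forall>\<delta>\<in>\<Delta>. sat_g T \<delta>)"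
    have "sat_g {p} \<alpha>" if p: "p \<in> T" for p
    proof -
      obtain s F where pe: "p = (s, F)" by fastforce
      have ct: "causal_team R F {s}" using H p pe
        by (auto simp: gen_causal_team_def causal_team_def)
      have "\<forall>\<delta>\<in>\<Delta>. sat_c F {s} \<delta>"
      proof
        fix \<delta> assume "\<delta> \<in> \<Delta>"
        then have "sat_g T \<delta>" using H by blast
        then have "sat_g {(s,F)} \<delta>" using flat_g p pe by blast
        then show "sat_c F {s} \<delta>" using emb[of F "{s}" \<delta>] by simp
      qed
      then have "sat_c F {s} \<alpha>" using C ct unfolding ent_c_def by blast
      then show ?thesis using emb[of F "{s}" \<alpha>] pe by simp
    qed
    then show "sat_g T \<alpha>" using flat_g by blast
  qed
qed

end
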